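(* For every $r \geqslant 4$ there exists $C(r) > 0$ such that the following holds. If $n \in \mathbb{N}$ and $p > 0$ satisfy $p\, n^{1/\lambda(r)} \log n \leqslant 1/(2\mathrm{e})$, and $n$ is sufficiently large, then $$\mathbb{E}\big(Y_m(uv)\big) \,\leqslant\, \left(\frac{m + C(r)}{2\binom{r}{2}\log n}\right)^{m - \lambda(r)}$$ for every edge $uv \in E(K_n)$ and every $m$ with $\lambda(r) + 1 \leqslant m \leqslant \binom{r}{2}\log n$.
   Context: $\lambda(r) = \frac{\binom{r}{2}-2}{r-2}$ and $\mathrm{e}$ is Euler's number. $G_{n,p}$ is the Erdős–Rényi random graph on $[n]$. For $m \in \mathbb{N}$ and $uv \in E(K_n)$, $Y_m(uv)$ is the number of subgraphs $F \subset G_{n,p}$ whose vertex set contains $u$ and $v$ and which satisfy $e(F) = m \geqslant \lambda(r)\big(v(F)-2\big) + 1$. *)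

theory Defs
  imports "HOL-Probability.Probability"
begin

definition lam :: "nat \<Rightarrow> real" where
  "lam r = (real (r choose 2) - 2) / (real r - 2)"

definition Kn_edges :: "nat \<Rightarrow> nat set set" where
  "Kn_edges n = {e. e \<subseteq> {1..n} \<and> card e = 2}"

definition Gnp :: "nat \<Rightarrow> real \<Rightarrow> nat set set pmf" where
  "Gnp n p = map_pmf (\<lambda>f. {e \<in> Kn_edges n. f e})
                     (Pi_pmf (Kn_edges n) False (\<lambda>_. bernoulli_pmf p))"

definition Ycount :: "nat \<Rightarrow> nat \<Rightarrow> nat \<Rightarrow> nat \<Rightarrow> nat \<Rightarrow> nat set set \<Rightarrow> nat" where
  "Ycount r n m u v G = card {(V, E). V \<subseteq> {1..n} \<and> u \<in> V \<and> v \<in> V \<and>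
       E \<subseteq> G \<and> (\<forall>e\<in>E. e \<subseteq> V) \<and> card E = m \<and>
       real m \<ge> lam r * (real (card V) - 2) + 1}"

end

theory Submission
  imports Defs
begin


lemma choose2_real: "real (r choose 2) = real r * (real r - 1) / 2"
proof (cases r)
  case 0 then show ?thesis by simp
next
  case (Suc k)
  have "r choose 2 = r * (r - 1) div 2" by (rule choose_two)
  moreover have "even (r * (r - 1))" by auto
  ultimately have "real (r choose 2) * 2 = real (r * (r - 1))"
    by (simp add: real_of_nat_div)
  then show ?thesis using Suc by (simp add: of_nat_diff algebra_simps)
qed

lemma lam_ge2: assumes "r \<ge> 4" shows "lam r \<ge> 2"
proof -
  have r: "real r \<ge> 4" using assms by simp
  have "2 * (real r - 2) \<le> real r * (real r - 1) / 2 - 2"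
  proof -
    have "0 \<le> (real r - 1) * (real r - 4)" using r by simp
    then show ?thesis by (simp add: algebra_simps)
  qed
  then show ?thesis unfolding lam_def choose2_real using r
    by (simp add: pos_le_divide_eq)
qed

lemma lam_sq: assumes "r \<ge> 4" shows "real (r choose 2) \<le> 2 * lam r ^ 2"
proof -
  have r: "real r \<ge> 4" using assms by simp
  define b where "b = real r * (real r - 1) / 2"
  have lr: "lam r * (real r - 2) = b - 2" unfolding lam_def choose2_real b_def using r by simp
  have key: "b * (real r - 2)^2 \<le> 2 * (b - 2)^2"
  proof -
    have "0 \<le> 3 * real r * (real r - 1) * (real r - 4) + 16" using r by simp
    moreover have "2 * (b - 2)^2 - b * (real r - 2)^2 = (3 * real r * (real r - 1) * (real r - 4) + 16) / 2"
      unfolding b_def by (simp add: power2_eq_square field_simps)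
    ultimately show ?thesis by simp
  qed
  have "b * (real r - 2)^2 \<le> 2 * (lam r * (real r - 2))^2" using key lr by simp
  hence "b * (real r - 2)^2 \<le> (2 * lam r^2) * (real r - 2)^2" by (simp add: power_mult_distrib)
  moreover have "(real r - 2)^2 > 0" using r by simp
  ultimately have "b \<le> 2 * lam r^2" by simp
  then show ?thesis by (simp add: choose2_real b_def)
qed

lemma prob_all:
  assumes "finite K" "E \<subseteq> K" "0 \<le> p" "p \<le> 1"
  shows "measure_pmf.prob (Pi_pmf K False (\<lambda>_. bernoulli_pmf p)) {f. \<forall>e\<in>E. f e} = p ^ card E"
proof -
  have "{f. \<forall>e\<in>E. f e} = Pi K (\<lambda>e. if e \<in> E then {True} else UNIV)"
    using assms(2) by (auto simp: Pi_def split: if_splits)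
  hence "measure_pmf.prob (Pi_pmf K False (\<lambda>_. bernoulli_pmf p)) {f. \<forall>e\<in>E. f e}
      = (\<Prod>e\<in>K. measure_pmf.prob (bernoulli_pmf p) (if e \<in> E then {True} else UNIV))"
    using assms(1) by (simp add: measure_Pi_pmf_Pi)
  also have "\<dots> = (\<Prod>e\<in>K. if e \<in> E then p else 1)"
    using assms(3,4) by (intro prod.cong) (auto simp: measure_pmf_single)
  also have "\<dots> = p ^ card (K \<inter> E)"
    using assms(1) by (simp add: prod.If_cases)
  also have "K \<inter> E = E" using assms(2) by auto
  finally show ?thesis .
qed

lemma card_small_subsets:
  "card {W. W \<subseteq> {1..n::nat} \<and> card W \<le> J} \<le> (J + 1) * n ^ J" if "n \<ge> 1"
proof -
  have eq: "{W. W \<subseteq> {1..n::nat} \<and> card W \<le> J} = (\<Union>j\<in>{..J}. {W. W \<subseteq> {1..n} \<and> card W = j})"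
    by auto
  have "card (\<Union>j\<in>{..J}. {W. W \<subseteq> {1..n} \<and> card W = j}) \<le> (\<Sum>j\<in>{..J}. card {W. W \<subseteq> {1..n} \<and> card W = j})"
    by (rule card_UN_le) simp
  also have "\<dots> = (\<Sum>j\<in>{..J}. n choose j)" by (simp add: n_subsets)
  also have "\<dots> \<le> (\<Sum>j\<in>{..J}. n ^ J)"
  proof (intro sum_mono)
    fix j assume "j \<in> {..J}"
    hence "n ^ j \<le> n ^ J" using that by (simp add: power_increasing)
    moreover have "n choose j \<le> n ^ j"
      by (cases "j \<le> n") (auto simp: binomial_le_pow binomial_eq_0)
    ultimately show "n choose j \<le> n ^ J" by linarith
  qed
  also have "\<dots> = (J+1) * n ^ J" by simp
  finally show ?thesis using eq by simp
qed

lemma card_Vs: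
  assumes "u \<in> {1..n}" "v \<in> {1..n}" "u \<noteq> v"
  shows "card {V. V \<subseteq> {1..n::nat} \<and> u \<in> V \<and> v \<in> V \<and> card V \<le> J + 2} \<le> (J + 1) * n ^ J"
proof -
  let ?Vs = "{V. V \<subseteq> {1..n::nat} \<and> u \<in> V \<and> v \<in> V \<and> card V \<le> J + 2}"
  let ?Ws = "{W. W \<subseteq> {1..n::nat} \<and> card W \<le> J}"
  have "?Vs \<subseteq> (\<lambda>W. W \<union> {u,v}) ` ?Ws"
  proof
    fix V assume V: "V \<in> ?Vs"
    have fV: "finite V" using V finite_subset by auto
    have "card (V - {u,v}) = card V - 2"
      using V fV assms(3) by (subst card_Diff_subset) auto
    hence "V - {u,v} \<in> ?Ws" using V by auto
    moreover have "V = (V - {u,v}) \<union> {u,v}" using V by auto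
    ultimately show "V \<in> (\<lambda>W. W \<union> {u,v}) ` ?Ws" by blast
  qed
  hence "card ?Vs \<le> card ((\<lambda>W. W \<union> {u,v}) ` ?Ws)"
    by (intro card_mono) auto
  also have "\<dots> \<le> card ?Ws" by (rule card_image_le) auto
  also have "\<dots> \<le> (J + 1) * n ^ J" using assms by (intro card_small_subsets) auto
  finally show ?thesis .
qed

definition Tset :: "nat \<Rightarrow> nat \<Rightarrow> nat \<Rightarrow> nat \<Rightarrow> nat \<Rightarrow> (nat set \<times> nat set set) set" where
  "Tset r n m u v = {(V, E). V \<subseteq> {1..n} \<and> u \<in> V \<and> v \<in> V \<and>
       E \<subseteq> Kn_edges n \<and> (\<forall>e\<in>E. e \<subseteq> V) \<and> card E = m \<and>
       real m \<ge> lam r * (real (card V) - 2) + 1}"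

lemma finite_Kn: "finite (Kn_edges n)"
  unfolding Kn_edges_def by (rule finite_subset[of _ "Pow {1..n}"]) auto

lemma finite_Tset: "finite (Tset r n m u v)"
proof (rule finite_subset[of _ "Pow {1..n} \<times> Pow (Kn_edges n)"])
  show "Tset r n m u v \<subseteq> Pow {1..n} \<times> Pow (Kn_edges n)" unfolding Tset_def by blast
  show "finite (Pow {1..n} \<times> Pow (Kn_edges n))" using finite_Kn by blast
qed

lemma card_Tset:
  assumes "{u,v} \<in> Kn_edges n" and J: "\<And>k::nat. real m \<ge> lam r * (real k - 2) + 1 \<Longrightarrow> k \<le> J + 2"
  shows "card (Tset r n m u v) \<le> (J + 1) * n ^ J * (((J+2) choose 2) choose m)"
proof -
  have uv0: "{u,v} \<subseteq> {1..n}" "card {u,v} = 2" using assms(1) unfolding Kn_edges_def by auto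
  have uv: "u \<in> {1..n}" "v \<in> {1..n}" "u \<noteq> v" using uv0 by (auto simp del: atLeastAtMost_iff)
  define Vs where "Vs = {V. V \<subseteq> {1..n::nat} \<and> u \<in> V \<and> v \<in> V \<and> card V \<le> J + 2}"
  define Es where "Es = (\<lambda>V::nat set. {E. E \<subseteq> {e. e \<subseteq> V \<and> card e = 2} \<and> card E = m})"
  have fVs: "finite Vs" unfolding Vs_def by (rule finite_subset[of _ "Pow {1..n}"]) auto
  have sub: "Tset r n m u v \<subseteq> Sigma Vs Es"
  proof
    fix x assume x: "x \<in> Tset r n m u v"
    obtain V E where xe: "x = (V, E)" by fastforce
    have h: "V \<subseteq> {1..n}" "u \<in> V" "v \<in> V" "E \<subseteq> Kn_edges n" "\<forall>e\<in>E. e \<subseteq> V" "card E = m"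
       "real m \<ge> lam r * (real (card V) - 2) + 1"
      using x unfolding xe Tset_def by auto
    have "card V \<le> J + 2" using J[OF h(7)] .
    hence "V \<in> Vs" using h unfolding Vs_def by simp
    moreover have "E \<in> Es V" using h unfolding Es_def Kn_edges_def by blast
    ultimately show "x \<in> Sigma Vs Es" unfolding xe by simp
  qed
  have fEs: "finite (Es V)" if "V \<in> Vs" for V
  proof -
    have "finite V" using finite_subset[of V "{1..n}"] that unfolding Vs_def by simp
    hence "finite (Pow (Pow V))" by simp
    moreover have "Es V \<subseteq> Pow (Pow V)" unfolding Es_def by blast
    ultimately show ?thesis by (rule finite_subset[rotated])
  qed
  have cEs: "card (Es V) \<le> ((J+2) choose 2) choose m" if "V \<in> Vs" for V
  proof -
    have fV: "finite V" using finite_subset[of V "{1..n}"] that unfolding Vs_def by simp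
    have "card {e. e \<subseteq> V \<and> card e = 2} = card V choose 2" using fV by (rule n_subsets)
    moreover have "finite {e. e \<subseteq> V \<and> card e = 2}"
      using finite_subset[of "{e. e \<subseteq> V \<and> card e = 2}" "Pow V"] fV by blast
    ultimately have "card (Es V) = (card V choose 2) choose m" unfolding Es_def by (simp add: n_subsets)
    also have "\<dots> \<le> ((J+2) choose 2) choose m"
      using that unfolding Vs_def by (intro binomial_right_mono) simp
    finally show ?thesis .
  qed
  have "card (Tset r n m u v) \<le> card (Sigma Vs Es)"
    by (rule card_mono[OF finite_SigmaI[OF fVs fEs] sub])
  also have "\<dots> = (\<Sum>V\<in>Vs. card (Es V))" using fVs fEs by (simp add: card_SigmaI)
  also have "\<dots> \<le> (\<Sum>V\<in>Vs. ((J+2) choose 2) choose m)" using cEs by (rule sum_mono)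
  also have "\<dots> = card Vs * (((J+2) choose 2) choose m)" by simp
  also have "\<dots> \<le> (J + 1) * n ^ J * (((J+2) choose 2) choose m)"
    using card_Vs[OF uv, of J] unfolding Vs_def by (rule mult_right_mono) simp
  finally show ?thesis .
qed


lemma Ycount_eq:
  "(\<lambda>f. real (Ycount r n m u v {e \<in> Kn_edges n. f e})) =
     (\<lambda>f. \<Sum>x\<in>Tset r n m u v. indicator {f. \<forall>e\<in>snd x. f e} f)"
proof (rule ext)
  fix f :: "nat set \<Rightarrow> bool"
  have eq: "{(V, E). V \<subseteq> {1..n} \<and> u \<in> V \<and> v \<in> V \<and>
       E \<subseteq> {e \<in> Kn_edges n. f e} \<and> (\<forall>e\<in>E. e \<subseteq> V) \<and> card E = m \<and>
       real m \<ge> lam r * (real (card V) - 2) + 1} = Tset r n m u v \<inter> {x. \<forall>e\<in>snd x. f e}"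
  proof (rule set_eqI)
    fix x :: "nat set \<times> nat set set"
    obtain V E where xe: "x = (V, E)" by fastforce
    show "x \<in> {(V, E). V \<subseteq> {1..n} \<and> u \<in> V \<and> v \<in> V \<and>
       E \<subseteq> {e \<in> Kn_edges n. f e} \<and> (\<forall>e\<in>E. e \<subseteq> V) \<and> card E = m \<and>
       real m \<ge> lam r * (real (card V) - 2) + 1} \<longleftrightarrow> x \<in> Tset r n m u v \<inter> {x. \<forall>e\<in>snd x. f e}"
      unfolding xe Tset_def by (simp only: mem_Collect_eq prod.case Int_iff snd_conv) blast
  qed
  have "real (Ycount r n m u v {e \<in> Kn_edges n. f e}) = real (card (Tset r n m u v \<inter> {x. \<forall>e\<in>snd x. f e}))"
    unfolding Ycount_def eq ..
  also have "\<dots> = (\<Sum>x\<in>Tset r n m u v \<inter> {x. \<forall>e\<in>snd x. f e}. 1)" by simp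
  also have "\<dots> = (\<Sum>x\<in>Tset r n m u v. if x \<in> {x. \<forall>e\<in>snd x. f e} then 1 else 0)"
    using finite_Tset by (rule sum.inter_restrict)
  also have "\<dots> = (\<Sum>x\<in>Tset r n m u v. indicator {f. \<forall>e\<in>snd x. f e} f)"
    by (intro sum.cong refl) (simp add: indicator_def)
  finally show "real (Ycount r n m u v {e \<in> Kn_edges n. f e}) =
     (\<Sum>x\<in>Tset r n m u v. indicator {f. \<forall>e\<in>snd x. f e} f)" .
qed

lemma expect_Y:
  assumes "0 \<le> p" "p \<le> 1"
  shows "measure_pmf.expectation (Gnp n p) (\<lambda>G. real (Ycount r n m u v G))
     = real (card (Tset r n m u v)) * p ^ m"
proof -
  let ?P = "Pi_pmf (Kn_edges n) False (\<lambda>_. bernoulli_pmf p)"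
  note Yfun = Ycount_eq[of r n m u v]
  have "measure_pmf.expectation (Gnp n p) (\<lambda>G. real (Ycount r n m u v G))
     = measure_pmf.expectation ?P (\<lambda>f. real (Ycount r n m u v {e \<in> Kn_edges n. f e}))"
    unfolding Gnp_def by (rule integral_map_pmf)
  also have "\<dots> = measure_pmf.expectation ?P (\<lambda>f. \<Sum>x\<in>Tset r n m u v. indicator {f. \<forall>e\<in>snd x. f e} f)"
    by (rule arg_cong[OF Yfun])
  also have "\<dots> = (\<Sum>x\<in>Tset r n m u v. measure_pmf.expectation ?P (indicator {f. \<forall>e\<in>snd x. f e}))"
  proof (rule Bochner_Integration.integral_sum)
    fix x show "integrable ?P (indicator {f. \<forall>e\<in>snd x. f e} :: _ \<Rightarrow> real)"
      by (rule integrable_real_indicator) (simp_all add: measure_pmf.emeasure_finite less_top[symmetric])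
  qed
  also have "\<dots> = (\<Sum>x\<in>Tset r n m u v. p ^ m)"
  proof (intro sum.cong refl)
    fix x assume x: "x \<in> Tset r n m u v"
    have "snd x \<subseteq> Kn_edges n" "card (snd x) = m" using x unfolding Tset_def by auto
    thus "measure_pmf.expectation ?P (indicator {f. \<forall>e\<in>snd x. f e}) = p ^ m"
      using prob_all[OF finite_Kn _ assms] by simp
  qed
  also have "\<dots> = real (card (Tset r n m u v)) * p ^ m" by simp
  finally show ?thesis .
qed



lemma fact_choose_le: "fact m * (N choose m) \<le> (N::nat) ^ m"
proof (cases "m \<le> N")
  case True
  have "fact N = (fact m * (N choose m)) * fact (N - m)"
    using binomial_fact_lemma[OF True] by (simp add: ac_simps)
  hence "fact m * (N choose m) = fact N div fact (N - m)" by simp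
  also have "\<dots> \<le> N ^ m" by (rule fact_div_fact_le_pow[OF True])
  finally show ?thesis .
next
  case False then show ?thesis by (simp add: binomial_eq_0)
qed

lemma pow_fact_le_exp: "(x::real) \<ge> 0 \<Longrightarrow> x ^ m / fact m \<le> exp x"
proof -
  assume x: "x \<ge> 0"
  have s: "(\<lambda>i. x ^ i / fact i) sums exp x"
    using exp_converges[of x] by (simp add: divide_inverse scaleR_conv_of_real mult.commute)
  have "sum (\<lambda>i. x ^ i / fact i) {m} \<le> suminf (\<lambda>i. x ^ i / fact i)"
    by (rule sum_le_suminf) (use s x in \<open>auto simp: sums_summable\<close>)
  thus ?thesis using s sums_unique by fastforce
qed

lemma binom_bound:
  assumes "m \<ge> 1"
  shows "real (N choose m) \<le> (exp 1 * real N / real m) ^ m"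
proof -
  have m0: "real m > 0" using assms by simp
  have "fact m * real (N choose m) \<le> real N ^ m"
  proof -
    have "real (fact m * (N choose m)) \<le> real (N ^ m)" using fact_choose_le[of m N] by (simp only: of_nat_le_iff)
    thus ?thesis by simp
  qed
  hence "real (N choose m) \<le> real N ^ m / fact m" by (simp add: field_simps)
  also have "\<dots> = real N ^ m * (real m ^ m / fact m) / real m ^ m" using m0 by simp
  also have "\<dots> \<le> real N ^ m * exp (real m) / real m ^ m"
    using pow_fact_le_exp[of "real m" m] m0
    by (intro divide_right_mono mult_left_mono) auto
  also have "exp (real m) = exp 1 ^ m" using exp_of_nat_mult[of m 1] by simp
  also have "real N ^ m * exp 1 ^ m / real m ^ m = (exp 1 * real N / real m) ^ m"
    by (simp add: power_mult_distrib power_divide)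
  finally show ?thesis .
qed

lemma ln_bound:
  fixes l b x :: real
  assumes l: "l > 0" and b: "b \<ge> 0" and x: "x \<ge> 1" and xb: "x \<ge> (2 * l * b) powr (2 * l)"
  shows "b * ln x \<le> x powr (1 / l)"
proof -
  define y where "y = x powr (1 / (2 * l))"
  have y0: "y > 0" using x unfolding y_def by simp
  have "2 * l * b = ((2 * l * b) powr (2 * l)) powr (1 / (2 * l))"
    using l b by (simp add: powr_powr)
  also have "\<dots> \<le> y" unfolding y_def using xb l by (intro powr_mono2) auto
  finally have yb: "2 * l * b \<le> y" .
  have "ln x = 2 * l * ln y" unfolding y_def using x l by (simp add: ln_powr)
  also have "\<dots> \<le> 2 * l * y" using y0 l less_imp_le[OF ln_less_self[OF y0]] by (intro mult_left_mono) auto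
  finally have "b * ln x \<le> b * (2 * l * y)" using b by (intro mult_left_mono)
  also have "\<dots> = (2 * l * b) * y" by simp
  also have "\<dots> \<le> y * y" using yb y0 by (intro mult_right_mono) auto
  also have "y * y = x powr (1 / l)" unfolding y_def using l by (simp add: powr_add[symmetric])
  finally show ?thesis .
qed

lemma key_ineq:
  fixes l b m x :: real
  assumes l: "l \<ge> 1" and b: "b \<ge> 0" "b \<le> 2 * l^2" and m: "m \<ge> 1" and x: "x \<ge> 0" "l * x \<le> m - 1"
  shows "b * ((x + 2) * (x + 1) / 2) \<le> m * (m + 3 * b)"
proof -
  have l0: "l > 0" using l by simp
  have h1: "l * (x + 2) \<le> m + 2 * l" and h2: "l * (x + 1) \<le> m + l"
    using x by (simp_all add: algebra_simps)
  have "(l * (x + 2)) * (l * (x + 1)) \<le> (m + 2 * l) * (m + l)"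
    using h1 h2 l0 x m by (intro mult_mono) auto
  hence A: "l^2 * ((x + 2) * (x + 1)) \<le> (m + 2 * l) * (m + l)"
    by (simp add: power2_eq_square algebra_simps)
  have B: "b * ((m + 2 * l) * (m + l)) \<le> 2 * l^2 * (m * (m + 3 * b))"
  proof -
    have e: "b * ((m + 2 * l) * (m + l)) = b * m^2 + 3 * l * b * m + 2 * l^2 * b"
      by (simp add: power2_eq_square algebra_simps)
    have t1: "b * m^2 \<le> 2 * l^2 * m^2" using b by (intro mult_right_mono) auto
    have t2: "3 * l * b * m \<le> 3 * l^2 * b * m"
    proof -
      have "l \<le> l^2" using l by (simp add: power2_eq_square)
      thus ?thesis using b m by (intro mult_right_mono mult_left_mono) auto
    qed
    have t3: "2 * l^2 * b \<le> 3 * l^2 * b * m"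
    proof -
      have "0 \<le> l^2 * b" using b by simp
      hence "2 * (l^2 * b) \<le> 3 * m * (l^2 * b)" using m by (intro mult_right_mono) auto
      thus ?thesis by (simp add: algebra_simps)
    qed
    have "2 * l^2 * (m * (m + 3 * b)) = 2 * l^2 * m^2 + 6 * l^2 * b * m"
      by (simp add: power2_eq_square algebra_simps)
    thus ?thesis using e t1 t2 t3 by linarith
  qed
  have "l^2 * (b * ((x + 2) * (x + 1) / 2)) = b * (l^2 * ((x + 2) * (x + 1))) / 2" by simp
  also have "\<dots> \<le> b * ((m + 2 * l) * (m + l)) / 2" using A b by (intro divide_right_mono mult_left_mono) auto
  also have "\<dots> \<le> l^2 * (m * (m + 3 * b))" using B by simp
  finally have "l^2 * (b * ((x + 2) * (x + 1) / 2)) \<le> l^2 * (m * (m + 3 * b))" .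
  moreover have "l^2 > 0" using l0 by simp
  ultimately show ?thesis by (simp only: mult_le_cancel_left_pos)
qed



theorem lemma3p8:
  "\<forall>r::nat. r \<ge> 4 \<longrightarrow> (\<exists>C>0. \<exists>n0::nat. \<forall>n\<ge>n0. \<forall>p::real.
     p > 0 \<and> p * real n powr (1 / lam r) * ln (real n) \<le> 1 / (2 * exp 1) \<longrightarrow>
     (\<forall>u v m. {u, v} \<in> Kn_edges n \<and>
        lam r + 1 \<le> real m \<and> real m \<le> real (r choose 2) * ln (real n) \<longrightarrow>
        measure_pmf.expectation (Gnp n p) (\<lambda>G. real (Ycount r n m u v G))
          \<le> ((real m + C) / (2 * real (r choose 2) * ln (real n))) powr (real m - lam r)))"
proof (intro allI impI)
  fix r :: nat assume r4: "r \<ge> 4"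
  define l where "l = lam r"
  define b where "b = real (r choose 2)"
  have l2: "l \<ge> 2" unfolding l_def using lam_ge2[OF r4] .
  have bl: "b \<le> 2 * l^2" unfolding l_def b_def using lam_sq[OF r4] .
  have b6: "b \<ge> 6"
  proof -
    have "real r * (real r - 1) \<ge> 4 * 3" using r4 by (intro mult_mono) auto
    thus ?thesis unfolding b_def choose2_real by simp
  qed
  define n0 :: nat where "n0 = max 27 (nat \<lceil>(2 * l * b) powr (2 * l)\<rceil>)"
  show "\<exists>C>0. \<exists>n0::nat. \<forall>n\<ge>n0. \<forall>p::real.
     p > 0 \<and> p * real n powr (1 / lam r) * ln (real n) \<le> 1 / (2 * exp 1) \<longrightarrow>
     (\<forall>u v m. {u, v} \<in> Kn_edges n \<and>
        lam r + 1 \<le> real m \<and> real m \<le> real (r choose 2) * ln (real n) \<longrightarrow>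
        measure_pmf.expectation (Gnp n p) (\<lambda>G. real (Ycount r n m u v G))
          \<le> ((real m + C) / (2 * real (r choose 2) * ln (real n))) powr (real m - lam r))"
  proof (rule exI[of _ "3 * b"], rule conjI)
    show "3 * b > 0" using b6 by simp
  next
    show "\<exists>n0::nat. \<forall>n\<ge>n0. \<forall>p::real.
     p > 0 \<and> p * real n powr (1 / lam r) * ln (real n) \<le> 1 / (2 * exp 1) \<longrightarrow>
     (\<forall>u v m. {u, v} \<in> Kn_edges n \<and>
        lam r + 1 \<le> real m \<and> real m \<le> real (r choose 2) * ln (real n) \<longrightarrow>
        measure_pmf.expectation (Gnp n p) (\<lambda>G. real (Ycount r n m u v G))
          \<le> ((real m + 3 * b) / (2 * real (r choose 2) * ln (real n))) powr (real m - lam r))"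
  proof (rule exI[of _ n0], intro allI impI)
    fix n :: nat and p :: real and u v m :: nat
    assume n: "n0 \<le> n"
    assume hp: "p > 0 \<and> p * real n powr (1 / lam r) * ln (real n) \<le> 1 / (2 * exp 1)"
    assume hm: "{u, v} \<in> Kn_edges n \<and> lam r + 1 \<le> real m \<and> real m \<le> real (r choose 2) * ln (real n)"
    have n27: "real n \<ge> 27" using n unfolding n0_def by simp
    have nbig: "real n \<ge> (2 * l * b) powr (2 * l)" using n unfolding n0_def by linarith
    define L where "L = ln (real n)"
    define a where "a = real n powr (1 / l)"
    have L3: "L \<ge> 3"
    proof -
      have "exp (3::real) = exp 1 ^ 3" using exp_of_nat_mult[of 3 "1::real"] by simp
      also have "\<dots> \<le> 3 ^ 3" using exp_le by (intro power_mono) auto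
      finally have "exp 3 \<le> real n" using n27 by simp
      thus ?thesis unfolding L_def using n27 by (subst ln_ge_iff) auto
    qed
    have a1: "a \<ge> 1" unfolding a_def using n27 l2 by (intro ge_one_powr_ge_zero) auto
    have bLa: "b * L \<le> a" unfolding L_def a_def using ln_bound[of l b "real n"] l2 b6 n27 nbig by simp
    have p0: "p > 0" and pa: "p * a * L \<le> 1 / (2 * exp 1)" using hp unfolding a_def L_def l_def by auto
    have uv: "{u, v} \<in> Kn_edges n" using hm by simp
    have m1: "l + 1 \<le> real m" and mb: "real m \<le> b * L" using hm unfolding l_def b_def L_def by auto
    have m_ge1: "m \<ge> 1" using m1 l2 by simp
    have pa': "p \<le> 1 / (2 * exp 1 * a * L)"
      using pa a1 L3 by (simp add: field_simps)
    have p1: "p \<le> 1"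
    proof -
      have aL: "1 \<le> a * L" using mult_mono[of 1 a 1 L] a1 L3 by simp
      have e1: "1 \<le> 2 * exp (1::real)" using exp_ge_add_one_self[of "1::real"] by simp
      have "1 * 1 \<le> (2 * exp 1) * (a * L)" using mult_mono[OF e1 aL] by simp
      hence "1 / (2 * exp 1 * a * L) \<le> 1" by (simp add: ac_simps)
      thus ?thesis using pa' by linarith
    qed
    have l0: "l > 0" using l2 by simp
    have b0: "b > 0" using b6 by simp
    have L0: "L > 0" using L3 by simp
    have a0: "a > 0" using a1 by simp
    have mpos: "real m > 0" using m_ge1 by simp
    define J where "J = nat \<lfloor>(real m - 1) / l\<rfloor>"
    have mm1: "(real m - 1) / l \<ge> 0" using m_ge1 l0 by simp
    have hJ: "real J \<le> (real m - 1) / l"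
      unfolding J_def using mm1 by (simp add: of_nat_nat)
    have lJ: "l * real J \<le> real m - 1" using hJ l0 by (simp add: field_simps)
    have Jm: "real J + 1 \<le> real m"
    proof -
      have "real J \<le> l * real J" using l2 by (intro mult_right_mono[of 1 l, simplified]) auto
      thus ?thesis using lJ by simp
    qed
    have Jprop: "k \<le> J + 2" if hk: "real m \<ge> lam r * (real k - 2) + 1" for k :: nat
    proof (cases "k \<le> 2")
      case True thus ?thesis by simp
    next
      case False
      hence "real (k - 2) = real k - 2" by (simp add: of_nat_diff)
      hence "l * real (k - 2) \<le> real m - 1" using hk unfolding l_def by simp
      hence "real (k - 2) \<le> (real m - 1) / l" using l0 by (simp add: field_simps)
      hence "k - 2 \<le> J" unfolding J_def by (rule le_nat_floor)
      thus ?thesis by simp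
    qed
    define NN where "NN = (J + 2) choose 2"
    have NNr: "real NN = (real J + 2) * (real J + 1) / 2"
      unfolding NN_def choose2_real by (simp add: algebra_simps)
    define q where "q = real NN / (2 * real m * L)"
    define base where "base = (real m + 3 * b) / (2 * b * L)"
    have E1: "measure_pmf.expectation (Gnp n p) (\<lambda>G. real (Ycount r n m u v G))
        = real (card (Tset r n m u v)) * p ^ m" using expect_Y[OF less_imp_le[OF p0] p1] .
    have cT: "real (card (Tset r n m u v)) \<le> real (J + 1) * real n ^ J * real (NN choose m)"
    proof -
      have "card (Tset r n m u v) \<le> (J + 1) * n ^ J * (NN choose m)"
        unfolding NN_def using card_Tset[OF uv Jprop] .
      hence "real (card (Tset r n m u v)) \<le> real ((J + 1) * n ^ J * (NN choose m))"
        by (simp only: of_nat_le_iff)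
      thus ?thesis by (simp only: of_nat_mult of_nat_power)
    qed
    have bin: "real (NN choose m) \<le> (exp 1 * real NN / real m) ^ m" using binom_bound[OF m_ge1] .
    have step1: "(exp 1 * real NN / real m) ^ m * p ^ m \<le> (q / a) ^ m"
    proof -
      have "exp 1 * p \<le> exp 1 * (1 / (2 * exp 1 * a * L))" using pa' by (intro mult_left_mono) auto
      also have "\<dots> = 1 / (2 * a * L)" by simp
      finally have "exp 1 * p \<le> 1 / (2 * a * L)" .
      hence "real NN / real m * (exp 1 * p) \<le> real NN / real m * (1 / (2 * a * L))"
        by (intro mult_left_mono) auto
      hence "exp 1 * real NN / real m * p \<le> q / a" unfolding q_def by (simp add: field_simps)
      hence "(exp 1 * real NN / real m * p) ^ m \<le> (q / a) ^ m"
        using p0 by (intro power_mono) auto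
      thus ?thesis by (simp add: power_mult_distrib[symmetric] mult.commute mult.left_commute)
    qed
    have step2: "real n ^ J \<le> a ^ (m - 1)"
    proof -
      have "real n ^ J = real n powr real J" using n27 by (simp add: powr_realpow)
      also have "\<dots> \<le> real n powr ((real m - 1) / l)" using hJ n27 by (intro powr_mono) auto
      also have "\<dots> = a powr (real m - 1)" unfolding a_def by (simp add: powr_powr)
      also have "\<dots> = a powr real (m - 1)" using m_ge1 by (simp add: of_nat_diff)
      also have "\<dots> = a ^ (m - 1)" using a0 by (simp add: powr_realpow)
      finally show ?thesis .
    qed
    have am: "a ^ m = a * a ^ (m - 1)" using m_ge1 by (metis Suc_diff_1 less_le_trans zero_less_one power_Suc)
    have q0: "q \<ge> 0" unfolding q_def using L0 by simp
    have E2: "measure_pmf.expectation (Gnp n p) (\<lambda>G. real (Ycount r n m u v G))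
        \<le> (real J + 1) / a * q ^ m"
    proof -
      have "measure_pmf.expectation (Gnp n p) (\<lambda>G. real (Ycount r n m u v G))
          \<le> real (J + 1) * real n ^ J * real (NN choose m) * p ^ m"
        unfolding E1 using cT p0 by (intro mult_right_mono) auto
      also have "\<dots> \<le> real (J + 1) * a ^ (m - 1) * ((exp 1 * real NN / real m) ^ m * p ^ m)"
      proof -
        have "real (J + 1) * real n ^ J * real (NN choose m) \<le> real (J + 1) * a ^ (m - 1) * (exp 1 * real NN / real m) ^ m"
          using step2 bin a0 by (intro mult_mono) auto
        thus ?thesis using p0 by (simp add: mult_right_mono mult.assoc)
      qed
      also have "\<dots> \<le> real (J + 1) * a ^ (m - 1) * (q / a) ^ m"
        using step1 a0 by (intro mult_left_mono) auto
      also have "\<dots> = (real J + 1) / a * q ^ m" using am a0 by (simp add: power_divide field_simps)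
      finally show ?thesis .
    qed
    have qb: "q \<le> base"
    proof -
      have k: "b * real NN \<le> real m * (real m + 3 * b)"
        unfolding NNr using key_ineq[of l b "real m" "real J"] l2 b0 bl m_ge1 lJ by auto
      have "q = (b * real NN) / (2 * b * real m * L)" unfolding q_def using b0 by simp
      also have "\<dots> \<le> (real m * (real m + 3 * b)) / (2 * b * real m * L)"
        using k b0 mpos L0 by (intro divide_right_mono) auto
      also have "\<dots> = base" unfolding base_def using mpos by simp
      finally show ?thesis .
    qed
    have base0: "base > 0" unfolding base_def using b0 L0 mpos by simp
    have base1: "base \<le> 1"
    proof -
      have "real m + 3 * b \<le> 2 * b * L" using mb L3 b0 mult_left_mono[OF L3, of b] by linarith
      thus ?thesis unfolding base_def using b0 L0 by simp
    qed
    have Ja: "(real J + 1) / a \<le> 1" using Jm mb bLa a0 by simp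
    have "measure_pmf.expectation (Gnp n p) (\<lambda>G. real (Ycount r n m u v G)) \<le> 1 * base ^ m"
    proof -
      have "(real J + 1) / a * q ^ m \<le> 1 * q ^ m" using Ja q0 by (intro mult_right_mono) auto
      also have "\<dots> \<le> 1 * base ^ m" using power_mono[OF qb q0, of m] by simp
      finally show ?thesis using E2 by linarith
    qed
    also have "\<dots> = base powr real m" using base0 by (simp add: powr_realpow)
    also have "\<dots> \<le> base powr (real m - l)" using base0 base1 l0 by (intro powr_mono') auto
    finally show "measure_pmf.expectation (Gnp n p) (\<lambda>G. real (Ycount r n m u v G))
          \<le> ((real m + 3 * b) / (2 * real (r choose 2) * ln (real n))) powr (real m - lam r)"
      unfolding base_def b_def L_def l_def .
  qed
  qed
qed


end
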